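(* Let $K:\mathbb B_d\times\mathbb B_d\to\mathcal M_n(\mathbb C)$ be a non-negative definite kernel which is invariant under $\mathcal U(d)$, i.e. $K(u\cdot\boldsymbol z,u\cdot\boldsymbol w)=K(\boldsymbol z,\boldsymbol w)$ for all $u\in\mathcal U(d)$ and $\boldsymbol z,\boldsymbol w\in\mathbb B_d$. Then $K(\boldsymbol z,\boldsymbol w)=\sum_{\ell=0}^\infty A_\ell\langle\boldsymbol z,\boldsymbol w\rangle^\ell$ for some sequence $\{A_\ell\}_{\ell\in\mathbb Z_+}$ of positive definite $n\times n$ matrices.
   Context: $\mathbb B_d$ is the open unit ball of $\mathbb C^d$, $\mathcal U(d)$ the group of $d\times d$ unitary matrices, $\langle\boldsymbol z,\boldsymbol w\rangle=\sum_iz_i\bar w_i$. Kernels are sesqui-analytic (holomorphic in the first, anti-holomorphic in the second variable). *)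

theory Defs
  imports "HOL-Analysis.Analysis" "HOL-Library.Complex_Order"
begin

abbreviation unit_ball :: "(complex ^ 'd) set" where
  "unit_ball \<equiv> ball 0 1"

definition cinner :: "complex ^ 'd \<Rightarrow> complex ^ 'd \<Rightarrow> complex" where
  "cinner z w = (\<Sum>i\<in>UNIV. z $ i * cnj (w $ i))"

definition adjoint_mat :: "complex ^ 'n ^ 'm \<Rightarrow> complex ^ 'm ^ 'n" where
  "adjoint_mat A = (\<chi> i j. cnj (A $ j $ i))"

definition unitary :: "complex ^ 'd ^ 'd \<Rightarrow> bool" where
  "unitary u \<longleftrightarrow> u ** adjoint_mat u = mat 1"

text \<open>Positive (semi)definite matrix: <A x, x> >= 0 for all x (complex order).\<close>
definition pos_def_mat :: "complex ^ 'n ^ 'n \<Rightarrow> bool" where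
  "pos_def_mat A \<longleftrightarrow> (\<forall>x. 0 \<le> cinner (A *v x) x)"

definition holo_on :: "(complex ^ 'd) set \<Rightarrow> (complex ^ 'd \<Rightarrow> complex) \<Rightarrow> bool" where
  "holo_on S f \<longleftrightarrow> (\<forall>z\<in>S. \<exists>L. (f has_derivative L) (at z) \<and> (\<forall>c v. L (c *s v) = c * L v))"

definition sesqui_analytic ::
  "(complex ^ 'd \<Rightarrow> complex ^ 'd \<Rightarrow> complex ^ 'n ^ 'n) \<Rightarrow> bool" where
  "sesqui_analytic K \<longleftrightarrow>
     (\<forall>w\<in>unit_ball. \<forall>i j. holo_on unit_ball (\<lambda>z. K z w $ i $ j)) \<and>
     (\<forall>z\<in>unit_ball. \<forall>i j. holo_on unit_ball (\<lambda>w. cnj (K z w $ i $ j)))"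

definition nnd_kernel ::
  "(complex ^ 'd \<Rightarrow> complex ^ 'd \<Rightarrow> complex ^ 'n ^ 'n) \<Rightarrow> bool" where
  "nnd_kernel K \<longleftrightarrow>
     (\<forall>(m::nat) (z :: nat \<Rightarrow> complex ^ 'd) (\<xi> :: nat \<Rightarrow> complex ^ 'n).
        (\<forall>p<m. z p \<in> unit_ball) \<longrightarrow>
        0 \<le> (\<Sum>p<m. \<Sum>q<m. cinner (K (z p) (z q) *v \<xi> q) (\<xi> p)))"

end

theory Submission
  imports Defs "HOL-Complex_Analysis.Complex_Analysis"
begin


lemma cinner_scale_left: "cinner (c *s z) w = c * cinner z w"
  by (simp add: cinner_def sum_distrib_left mult.assoc)
lemma cinner_scale_right: "cinner z (c *s w) = cnj c * cinner z w"
  by (simp add: cinner_def sum_distrib_left algebra_simps)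
lemma cinner_add_left: "cinner (x + y) w = cinner x w + cinner y w"
  by (simp add: cinner_def sum.distrib algebra_simps)
lemma cinner_add_right: "cinner z (x + y) = cinner z x + cinner z y"
  by (simp add: cinner_def sum.distrib algebra_simps)
lemma cinner_diff_left: "cinner (x - y) w = cinner x w - cinner y w"
  by (simp add: cinner_def sum_subtractf algebra_simps)
lemma cinner_diff_right: "cinner z (x - y) = cinner z x - cinner z y"
  by (simp add: cinner_def sum_subtractf algebra_simps)
lemma cinner_cnj: "cnj (cinner z w) = cinner w z"
  by (simp add: cinner_def mult.commute)
lemma cinner_self: "cinner z z = of_real (norm z ^ 2)"
proof -
  have "cinner z z = (\<Sum>i\<in>UNIV. of_real (norm (z $ i) ^ 2))"
    unfolding cinner_def by (intro sum.cong refl) (metis complex_norm_square)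
  also have "\<dots> = of_real (\<Sum>i\<in>UNIV. norm (z $ i) ^ 2)" by simp
  also have "(\<Sum>i\<in>UNIV. norm (z $ i) ^ 2) = norm z ^ 2"
    by (simp add: norm_vec_def L2_set_def sum_nonneg)
  finally show ?thesis .
qed
lemma cinner_axis_right: "cinner z (axis i c) = z $ i * cnj c"
proof -
  have "cinner z (axis i c) = (\<Sum>j\<in>UNIV. if j = i then z $ i * cnj c else 0)"
    unfolding cinner_def axis_def by (intro sum.cong) auto
  then show ?thesis by simp
qed
lemma cinner_axis_left: "cinner (axis i c) z = c * cnj (z $ i)"
proof -
  have "cinner (axis i c) z = (\<Sum>j\<in>UNIV. if j = i then c * cnj (z $ i) else 0)"
    unfolding cinner_def axis_def by (intro sum.cong) auto
  then show ?thesis by simp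
qed
lemma norm_axis1: "norm (axis i (1::complex)) = 1"
  by (simp add: norm_axis_1)



definition rmat :: "complex \<Rightarrow> complex ^ 'd \<Rightarrow> complex ^ 'd ^ 'd" where
  "rmat t v = (\<chi> i j. (if i = j then 1 else 0) + ((t - 1) / of_real (norm v ^ 2)) * v $ i * cnj (v $ j))"

lemma rmat_mult: "rmat t v *v z = z + (((t - 1) / of_real (norm v ^ 2)) * cinner z v) *s v"
proof -
  let ?c = "(t - 1) / of_real (norm v ^ 2)"
  have "(rmat t v *v z) $ i = z $ i + ?c * cinner z v * v $ i" for i
  proof -
    have "(rmat t v *v z) $ i = (\<Sum>j\<in>UNIV. (if i = j then z $ j else 0) + ?c * v $ i * (z $ j * cnj (v $ j)))"
      unfolding rmat_def matrix_vector_mult_def vec_lambda_beta by (intro sum.cong) (auto simp: algebra_simps)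
    also have "\<dots> = z $ i + ?c * v $ i * cinner z v"
      by (simp add: sum.distrib sum_distrib_left cinner_def)
    finally show ?thesis by simp
  qed
  then show ?thesis by (simp add: vec_eq_iff)
qed

lemma coef_identity:
  assumes "cmod t = 1" "v \<noteq> (0::complex^'d)"
  shows "(t - 1) / of_real (norm v ^ 2) + cnj ((t - 1) / of_real (norm v ^ 2))
     + ((t - 1) / of_real (norm v ^ 2)) * cnj ((t - 1) / of_real (norm v ^ 2)) * of_real (norm v ^ 2) = 0"
proof -
  have N: "(of_real (norm v ^ 2) :: complex) \<noteq> 0" using assms by simp
  have tt: "t * cnj t = 1" using assms by (metis complex_norm_square of_real_1 power_one)
  have "cnj (of_real (norm v ^ 2) :: complex) = of_real (norm v ^ 2)" by simp
  then show ?thesis using N tt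
    by (simp add: field_simps)
qed

lemma unitary_rmat:
  assumes "cmod t = 1" "v \<noteq> 0"
  shows "unitary (rmat t v)"
proof -
  define c where "c = (t - 1) / of_real (norm v ^ 2)"
  define N where "N = (of_real (norm v ^ 2) :: complex)"
  have vv: "(\<Sum>k\<in>UNIV. v $ k * cnj (v $ k)) = N"
    using cinner_self[of v] by (simp add: cinner_def N_def)
  have R: "rmat t v = (\<chi> i j. (if i = j then 1 else 0) + c * v $ i * cnj (v $ j))"
    by (simp add: rmat_def c_def)
  have "(rmat t v ** adjoint_mat (rmat t v)) $ i $ j = (if i = j then 1 else 0)" for i j
  proof -
    have "(rmat t v ** adjoint_mat (rmat t v)) $ i $ j =
      (\<Sum>k\<in>UNIV. (if i = k then (if j = k then 1 else 0) else 0)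
        + (if i = k then cnj c * cnj (v $ j) * v $ i else 0)
        + (if j = k then c * v $ i * cnj (v $ j) else 0)
        + c * cnj c * v $ i * cnj (v $ j) * (v $ k * cnj (v $ k)))"
      unfolding R adjoint_mat_def matrix_matrix_mult_def vec_lambda_beta
      by (intro sum.cong) (auto simp: algebra_simps)
    also have "\<dots> = (\<Sum>k\<in>UNIV. (if i = k then (if j = k then 1 else 0) else 0))
        + (\<Sum>k\<in>UNIV. (if i = k then cnj c * cnj (v $ j) * v $ i else 0))
        + (\<Sum>k\<in>UNIV. (if j = k then c * v $ i * cnj (v $ j) else 0))
        + (\<Sum>k\<in>UNIV. c * cnj c * v $ i * cnj (v $ j) * (v $ k * cnj (v $ k)))"
      by (simp add: sum.distrib)
    also have "\<dots> = (if i = j then 1 else 0) + cnj c * cnj (v $ j) * v $ i + c * v $ i * cnj (v $ j)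
        + c * cnj c * v $ i * cnj (v $ j) * N"
      by (simp add: sum_distrib_left[symmetric] vv)
    also have "\<dots> = (if i = j then 1 else 0) + v $ i * cnj (v $ j) * (c + cnj c + c * cnj c * N)"
      by (simp add: algebra_simps)
    also have "\<dots> = (if i = j then 1 else 0)"
      using coef_identity[OF assms] by (simp add: c_def N_def)
    finally show ?thesis .
  qed
  then show ?thesis unfolding unitary_def by (simp add: vec_eq_iff mat_def)
qed

lemma unitary_mat:
  assumes "cmod t = 1"
  shows "unitary (mat t :: complex^'d^'d)"
proof -
  have tt: "t * cnj t = 1" using assms by (metis complex_norm_square of_real_1 power_one)
  have "(mat t ** adjoint_mat (mat t :: complex^'d^'d)) $ i $ j = (if i = j then 1 else 0)" for i j
  proof -
    have "(mat t ** adjoint_mat (mat t :: complex^'d^'d)) $ i $ j =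
       (\<Sum>k\<in>UNIV. if k = i then (if i = j then t * cnj t else 0) else 0)"
      unfolding adjoint_mat_def matrix_matrix_mult_def mat_def vec_lambda_beta by (intro sum.cong) auto
    then show ?thesis using tt by simp
  qed
  then show ?thesis unfolding unitary_def by (simp add: vec_eq_iff mat_def)
qed

lemma mat_mult_vec: "(mat t :: complex^'d^'d) *v z = t *s z"
proof -
  have "((mat t :: complex^'d^'d) *v z) $ i = t * z $ i" for i
  proof -
    have "((mat t :: complex^'d^'d) *v z) $ i = (\<Sum>j\<in>UNIV. if j = i then t * z $ i else 0)"
      unfolding matrix_vector_mult_def mat_def vec_lambda_beta by (intro sum.cong) auto
    then show ?thesis by simp
  qed
  then show ?thesis by (simp add: vec_eq_iff)
qed

lemma cinner_gen:
  "cinner (z + (c * cinner z v) *s v) (w + (c * cinner w v) *s v) = cinner z w + cinner z v * cinner v w *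
     (c + cnj c + c * cnj c * cinner v v)"
  unfolding cinner_add_left cinner_add_right cinner_scale_left cinner_scale_right
  by (simp add: algebra_simps flip: cinner_cnj[of w v])

lemma cinner_rmat:
  assumes "cmod t = 1" "v \<noteq> 0"
  shows "cinner (rmat t v *v z) (rmat t v *v w) = cinner z w"
proof -
  let ?c = "(t - 1) / of_real (norm v ^ 2)"
  let ?N = "of_real (norm v ^ 2) :: complex"
  have "cinner (rmat t v *v z) (rmat t v *v w) = cinner z w + cinner z v * cinner v w *
     (?c + cnj ?c + ?c * cnj ?c * ?N)"
    unfolding rmat_mult cinner_gen cinner_self by simp
  then show ?thesis using coef_identity[OF assms] by simp
qed

lemma cinner_mat:
  assumes "cmod t = 1"
  shows "cinner ((mat t :: complex^'d^'d) *v z) (mat t *v w) = cinner z w"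
proof -
  have tt: "t * cnj t = 1" using assms by (metis complex_norm_square of_real_1 power_one)
  show ?thesis unfolding mat_mult_vec cinner_scale_left cinner_scale_right
    using tt by (simp add: mult.assoc[symmetric] mult.commute[of "cnj t"])
qed

lemma norm_from_cinner:
  assumes "cinner z z = cinner w w" shows "norm z = norm w"
  using assms unfolding cinner_self by (metis of_real_eq_iff norm_ge_zero power2_eq_iff_nonneg)

lemma ball_unitary_rmat:
  assumes "cmod t = 1" "v \<noteq> 0" "z \<in> unit_ball"
  shows "rmat t v *v z \<in> unit_ball"
  using assms norm_from_cinner[OF cinner_rmat[OF assms(1,2), of z z]] by simp

lemma ball_unitary_mat:
  assumes "cmod t = 1" "z \<in> unit_ball"
  shows "(mat t :: complex^'d^'d) *v z \<in> unit_ball"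
  using assms norm_from_cinner[OF cinner_mat[OF assms(1), of z z]] by simp



lemma norm_smult_vec: "norm (c *s (v::complex^'d)) = cmod c * norm v"
proof -
  have e: "c * cnj c = of_real (cmod c) * of_real (cmod c)"
    by (subst complex_norm_square[symmetric]) (simp add: power2_eq_square)
  have "cinner (c *s v) (c *s v) = (c * cnj c) * cinner v v"
    unfolding cinner_scale_left cinner_scale_right by (simp add: ac_simps)
  also have "\<dots> = (of_real (cmod c) * cnj (of_real (cmod c))) * cinner v v"
    unfolding e complex_cnj_complex_of_real ..
  also have "\<dots> = cinner ((of_real (cmod c)) *s v) ((of_real (cmod c)) *s v)"
    unfolding cinner_scale_left cinner_scale_right by (simp add: ac_simps)
  finally have "norm (c *s v) = norm ((of_real (cmod c)) *s v)" by (rule norm_from_cinner)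
  also have "(complex_of_real (cmod c)) *s v = cmod c *\<^sub>R v"
    by (simp add: vec_eq_iff vector_scaleR_component scaleR_conv_of_real[where 'a=complex])
  finally show ?thesis by simp
qed


lemma bl_smult: "bounded_linear (\<lambda>h::complex. h *s (v::complex^'d))"
proof (rule bounded_linear_intro[where K="norm v"])
  show "(x + y) *s v = x *s v + y *s v" for x y by (simp add: vec_eq_iff algebra_simps)
  show "(r *\<^sub>R x) *s v = r *\<^sub>R (x *s v)" for r x by (simp add: vec_eq_iff vector_scaleR_component scaleR_conv_of_real[where 'a=complex])
  show "norm (x *s v) \<le> norm x * norm v" for x by (simp add: norm_smult_vec)
qed

lemma line_deriv:
  fixes g :: "complex^'d \<Rightarrow> complex"
  assumes "holo_on unit_ball g" "a + \<mu> *s v \<in> unit_ball"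
  shows "(\<lambda>l. g (a + l *s v)) field_differentiable (at \<mu>)"
proof -
  obtain L where L: "(g has_derivative L) (at (a + \<mu> *s v))" "\<And>c w. L (c *s w) = c * L w"
    using assms unfolding holo_on_def by blast
  have d1: "((\<lambda>l. a + l *s v) has_derivative (\<lambda>h. h *s v)) (at \<mu>)"
  proof -
    have "((\<lambda>l. l *s v) has_derivative (\<lambda>h. h *s v)) (at \<mu>)"
      by (rule bounded_linear_imp_has_derivative[OF bl_smult])
    from has_derivative_add[OF has_derivative_const this] show ?thesis by simp
  qed
  have "((g \<circ> (\<lambda>l. a + l *s v)) has_derivative (L \<circ> (\<lambda>h. h *s v))) (at \<mu>)"
    by (rule diff_chain_at[OF d1 L(1)])
  moreover have "L \<circ> (\<lambda>h. h *s v) = (*) (L v)"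
    by (auto simp: L(2) fun_eq_iff mult.commute)
  ultimately have "((\<lambda>l. g (a + l *s v)) has_field_derivative L v) (at \<mu>)"
    by (simp add: has_field_derivative_def o_def)
  then show ?thesis unfolding field_differentiable_def by blast
qed




lemma line_holo:
  fixes g :: "complex^'d \<Rightarrow> complex"
  assumes "holo_on unit_ball g"
  shows "(\<lambda>l. g (a + l *s v)) holomorphic_on {l. a + l *s v \<in> unit_ball}"
  unfolding holomorphic_on_def
  using line_deriv[OF assms] field_differentiable_at_within by blast

lemma line_open: "open {l::complex. a + l *s (v::complex^'d) \<in> unit_ball}"
proof -
  have "continuous_on UNIV (\<lambda>l::complex. a + l *s v)"
    by (intro continuous_on_add continuous_on_const linear_continuous_on bl_smult)
  then have "open ((\<lambda>l::complex. a + l *s v) -` unit_ball)"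
    by (intro open_vimage) auto
  then show ?thesis by (simp add: vimage_def)
qed

lemma line_convex: "convex {l::complex. a + l *s (v::complex^'d) \<in> unit_ball}"
  unfolding convex_def
proof (intro ballI allI impI)
  fix x y :: complex and u w :: real
  assume x: "x \<in> {l. a + l *s v \<in> unit_ball}" and y: "y \<in> {l. a + l *s v \<in> unit_ball}"
    and "0 \<le> u" "0 \<le> w" "u + w = 1"
  have "a + (u *\<^sub>R x + w *\<^sub>R y) *s v = u *\<^sub>R (a + x *s v) + w *\<^sub>R (a + y *s v)"
    using \<open>u + w = 1\<close>
  proof -
    have "of_real u + of_real w = (1::complex)" using \<open>u + w = 1\<close>
      by (metis of_real_1 of_real_add)
    then have "a $ i = of_real u * a $ i + of_real w * a $ i" for i
      by (metis comm_semiring_class.distrib mult_1)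
    then show ?thesis
      by (simp add: vec_eq_iff vector_scaleR_component scaleR_conv_of_real[where 'a=complex] algebra_simps)
  qed
  moreover have "u *\<^sub>R (a + x *s v) + w *\<^sub>R (a + y *s v) \<in> unit_ball"
    using x y \<open>0 \<le> u\<close> \<open>0 \<le> w\<close> \<open>u + w = 1\<close> convex_ball[of 0 1]
    unfolding convex_def by blast
  ultimately show "u *\<^sub>R x + w *\<^sub>R y \<in> {l. a + l *s v \<in> unit_ball}" by simp
qed

lemma one_islimpt_circle: "(1::complex) islimpt sphere 0 1"
proof (rule connected_imp_perfect)
  show "connected (sphere (0::complex) 1)" by (rule connected_sphere) simp
  show "1 \<in> sphere (0::complex) 1" by simp
  show "sphere (0::complex) 1 \<noteq> {x}" for x
  proof
    assume h: "sphere (0::complex) 1 = {x}"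
    have "1 \<in> sphere (0::complex) 1" "-1 \<in> sphere (0::complex) 1" by auto
    then show False using h by auto
  qed
qed

lemma slice_const:
  fixes g :: "complex^'d \<Rightarrow> complex"
  assumes "holo_on unit_ball g"
    and "\<And>t. cmod t = 1 \<Longrightarrow> a + t *s v \<in> unit_ball \<and> g (a + t *s v) = g (a + v)"
  shows "g a = g (a + v)"
proof -
  define S where "S = {l::complex. a + l *s v \<in> unit_ball}"
  have circ: "sphere 0 1 \<subseteq> S" using assms(2) by (auto simp: S_def)
  have "0 \<in> S"
  proof -
    have "1 \<in> S" "-1 \<in> S" using circ by auto
    then have "(1/2) *\<^sub>R (1::complex) + (1/2) *\<^sub>R (-1) \<in> S"
      using line_convex[of a v] unfolding S_def convex_def by (smt (verit) field_sum_of_halves)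
    then show ?thesis by simp
  qed
  have "(\<lambda>l. g (a + l *s v) - g (a + v)) l = 0" if "l \<in> S" for l
  proof (rule analytic_continuation[where f="\<lambda>l. g (a + l *s v) - g (a + v)" and S=S and U="sphere 0 1" and \<xi>=1])
    show "(\<lambda>l. g (a + l *s v) - g (a + v)) holomorphic_on S"
      unfolding S_def by (rule holomorphic_on_diff[OF line_holo[OF assms(1)] holomorphic_on_const])
    show "open S" unfolding S_def by (rule line_open)
    show "connected S" unfolding S_def by (rule convex_connected[OF line_convex])
    show "sphere 0 1 \<subseteq> S" by (rule circ)
    show "1 \<in> S" using circ by auto
    show "(1::complex) islimpt sphere 0 1" by (rule one_islimpt_circle)
    show "(\<lambda>l. g (a + l *s v) - g (a + v)) z = 0" if "z \<in> sphere 0 1" for z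
      using assms(2)[of z] that by simp
    show "l \<in> S" by fact
  qed
  from this[OF \<open>0 \<in> S\<close>] show ?thesis by simp
qed



lemma higher_deriv_cnj_cnj:
  assumes G: "G holomorphic_on S" and S: "open S" and sym: "\<And>z. z \<in> S \<Longrightarrow> cnj z \<in> S"
    and z: "z \<in> S"
  shows "(deriv ^^ n) (\<lambda>s. cnj (G (cnj s))) z = cnj ((deriv ^^ n) G (cnj z))"
  using z
proof (induction n arbitrary: z)
  case 0 then show ?case by simp
next
  case (Suc n z)
  have hc: "\<And>F. F holomorphic_on S \<Longrightarrow> (\<lambda>s. cnj (F (cnj s))) holomorphic_on S"
  proof -
    fix F assume "F holomorphic_on S"
    then have "F holomorphic_on cnj ` S" by (rule holomorphic_on_subset) (auto intro: sym)
    from holomorphic_on_compose_cnj_cnj[OF this S] show "(\<lambda>s. cnj (F (cnj s))) holomorphic_on S"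
      by (simp add: o_def)
  qed
  have "(deriv ^^ Suc n) (\<lambda>s. cnj (G (cnj s))) z = deriv ((deriv ^^ n) (\<lambda>s. cnj (G (cnj s)))) z"
    by simp
  also have "\<dots> = deriv (\<lambda>s. cnj ((deriv ^^ n) G (cnj s))) z"
  proof (rule complex_derivative_transform_within_open[OF _ _ S Suc.prems])
    show "(deriv ^^ n) (\<lambda>s. cnj (G (cnj s))) holomorphic_on S"
      by (rule holomorphic_higher_deriv[OF hc[OF G] S])
    show "(\<lambda>s. cnj ((deriv ^^ n) G (cnj s))) holomorphic_on S"
      by (rule hc[OF holomorphic_higher_deriv[OF G S]])
  qed (use Suc.IH in auto)
  also have "\<dots> = cnj (deriv ((deriv ^^ n) G) (cnj z))"
  proof -
    have "(deriv ^^ n) G holomorphic_on S" by (rule holomorphic_higher_deriv[OF G S])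
    then have "((deriv ^^ n) G has_field_derivative deriv ((deriv ^^ n) G) (cnj z)) (at (cnj z))"
      using sym[OF Suc.prems] S by (simp add: holomorphic_derivI)
    from has_field_derivative_cnj_cnj[OF this]
    show ?thesis by (simp add: o_def DERIV_imp_deriv)
  qed
  finally show ?case by simp
qed

lemma core:
  fixes f :: "complex \<Rightarrow> complex \<Rightarrow> complex"
  assumes F1: "\<And>m. cmod m < 1 \<Longrightarrow> (\<lambda>l. f l m) holomorphic_on ball 0 1"
    and F2: "\<And>l. cmod l < 1 \<Longrightarrow> (\<lambda>m. cnj (f l m)) holomorphic_on ball 0 1"
    and F3: "\<And>t l m. cmod t = 1 \<Longrightarrow> cmod l < 1 \<Longrightarrow> cmod m < 1 \<Longrightarrow> f (t * l) (t * m) = f l m"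
  shows "\<exists>A. \<forall>l r. cmod l < 1 \<longrightarrow> 0 \<le> r \<longrightarrow> r < 1 \<longrightarrow>
            (\<lambda>n. A n * (l * of_real r) ^ n) sums f l (of_real r)"
proof -
  define c where "c n r = (deriv ^^ n) (\<lambda>l. f l (of_real r)) 0 / fact n" for n r
  define b where "b n l = (deriv ^^ n) (\<lambda>m. cnj (f l m)) 0 / fact n" for n l
  have claim: "b n l * of_real r ^ n = cnj (c n r) * cnj l ^ n"
    if l: "0 < cmod l" "cmod l < 1" and r: "0 \<le> r" "r < 1" for n l r
  proof -
    define M where "M = max r (cmod l)"
    have M: "0 < M" "M < 1" using l r unfolding M_def by (auto simp: less_max_iff_disj)
    define D where "D = ball (0::complex) (1 / M)"
    have inD1: "cmod (of_real r * s) < 1" if "s \<in> D" for s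
    proof -
      have "cmod (of_real r * s) = r * cmod s" using r by (simp add: norm_mult)
      also have "\<dots> \<le> M * cmod s" by (auto simp: M_def intro!: mult_right_mono)
      also have "\<dots> < M * (1 / M)" using that M by (intro mult_strict_left_mono) (auto simp: D_def)
      finally show ?thesis using M by simp
    qed
    have inD2: "cmod (l * s) < 1" if "s \<in> D" for s
    proof -
      have "cmod (l * s) = cmod l * cmod s" by (simp add: norm_mult)
      also have "\<dots> \<le> M * cmod s" by (auto simp: M_def intro!: mult_right_mono)
      also have "\<dots> < M * (1 / M)" using that M by (intro mult_strict_left_mono) (auto simp: D_def)
      finally show ?thesis using M by simp
    qed
    have Dsym: "cnj s \<in> D" if "s \<in> D" for s using that by (simp add: D_def)
    have oD: "open D" by (simp add: D_def)
    have circ: "sphere 0 1 \<subseteq> D" using M by (auto simp: D_def)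
    have H: "(\<lambda>m. cnj (f l m)) holomorphic_on ball 0 1" using F2 l by simp
    have Fr: "(\<lambda>x. f x (of_real r)) holomorphic_on ball 0 1" using F1 r by simp
    define P where "P = (\<lambda>s. cnj (f l (of_real r * s)))"
    define G where "G = (\<lambda>x. f (l * x) (of_real r))"
    define Q where "Q = (\<lambda>s. cnj (G (cnj s)))"
    have holP: "P holomorphic_on D"
    proof -
      have "((\<lambda>m. cnj (f l m)) \<circ> (\<lambda>s. of_real r * s)) holomorphic_on D"
        by (rule holomorphic_on_compose_gen[OF _ H]) (auto intro: holomorphic_intros inD1)
      then show ?thesis by (simp add: P_def o_def)
    qed
    have holG: "G holomorphic_on D"
    proof -
      have "((\<lambda>x. f x (of_real r)) \<circ> (\<lambda>s. l * s)) holomorphic_on D"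
        by (rule holomorphic_on_compose_gen[OF _ Fr]) (auto intro: holomorphic_intros inD2)
      then show ?thesis by (simp add: G_def o_def)
    qed
    have holQ: "Q holomorphic_on D"
    proof -
      have "G holomorphic_on cnj ` D" by (rule holomorphic_on_subset[OF holG]) (auto intro: Dsym)
      from holomorphic_on_compose_cnj_cnj[OF this oD] show ?thesis by (simp add: Q_def o_def)
    qed
    have PQ: "P s = Q s" if "s \<in> D" for s
    proof -
      have "(\<lambda>s. P s - Q s) s = 0"
      proof (rule analytic_continuation[where f="\<lambda>s. P s - Q s" and S=D and U="sphere 0 1" and \<xi>=1])
        show "(\<lambda>s. P s - Q s) holomorphic_on D" by (intro holomorphic_intros holP holQ)
        show "open D" by (rule oD)
        show "connected D" by (simp add: D_def)
        show "sphere 0 1 \<subseteq> D" by (rule circ)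
        show "1 \<in> D" using circ by auto
        show "(1::complex) islimpt sphere 0 1" by (rule one_islimpt_circle)
        show "s \<in> D" by fact
        fix z :: complex assume z: "z \<in> sphere 0 1"
        then have z1: "cmod z = 1" by simp
        have "z * cnj z = 1" using z1 by (metis complex_norm_square of_real_1 power_one)
        then have zl: "z * (l * cnj z) = l" by (metis mult.left_commute mult_1_right)
        have "cmod (l * cnj z) < 1" using l z1 by (simp add: norm_mult)
        from F3[OF z1 this, of "of_real r"] r
        have "f (z * (l * cnj z)) (z * of_real r) = f (l * cnj z) (of_real r)" by simp
        then have "f l (z * of_real r) = f (l * cnj z) (of_real r)" unfolding zl .
        then show "(\<lambda>s. P s - Q s) z = 0" by (simp add: P_def Q_def G_def mult.commute)
      qed
      then show ?thesis by simp
    qed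
    have "0 \<in> D" using M by (simp add: D_def)
    have e1: "(deriv ^^ n) P 0 = (deriv ^^ n) Q 0"
      by (rule higher_deriv_transform_within_open[OF holP holQ oD \<open>0 \<in> D\<close> PQ])
    have e2: "(deriv ^^ n) P 0 = of_real r ^ n * (deriv ^^ n) (\<lambda>m. cnj (f l m)) 0"
      unfolding P_def
      using higher_deriv_compose_linear[OF H oD open_ball \<open>0 \<in> D\<close>, of "of_real r" n] inD1
      by simp
    have e3: "(deriv ^^ n) Q 0 = cnj ((deriv ^^ n) G 0)"
      unfolding Q_def using higher_deriv_cnj_cnj[OF holG oD Dsym \<open>0 \<in> D\<close>] by simp
    have e4: "(deriv ^^ n) G 0 = l ^ n * (deriv ^^ n) (\<lambda>x. f x (of_real r)) 0"
      unfolding G_def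
      using higher_deriv_compose_linear[OF Fr oD open_ball \<open>0 \<in> D\<close>, of l n] inD2
      by simp
    have "b n l * of_real r ^ n * fact n = cnj (c n r) * cnj l ^ n * fact n"
      unfolding b_def c_def using e1 e2 e3 e4 by (simp add: field_simps)
    then show ?thesis by simp
  qed
  define l0 where "l0 = (1/2 :: complex)"
  define A where "A n = cnj (b n l0) * 2 ^ n" for n
  have cA: "c n r = A n * of_real r ^ n" if "0 \<le> r" "r < 1" for n r
  proof -
    have "b n l0 * of_real r ^ n = cnj (c n r) * cnj l0 ^ n"
      by (rule claim) (use that in \<open>auto simp: l0_def\<close>)
    then have "cnj (b n l0) * of_real r ^ n = c n r * l0 ^ n"
      by (metis complex_cnj_cnj complex_cnj_complex_of_real complex_cnj_mult complex_cnj_power)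
    then have "cnj (b n l0) * of_real r ^ n * 2 ^ n = c n r"
      by (simp add: l0_def power_divide field_simps)
    then show ?thesis by (simp add: A_def mult_ac)
  qed
  show ?thesis
  proof (intro exI allI impI)
    fix l :: complex and r :: real
    assume l: "cmod l < 1" and r: "0 \<le> r" "r < 1"
    have "(\<lambda>n. (deriv ^^ n) (\<lambda>x. f x (of_real r)) 0 / fact n * (l - 0) ^ n) sums f l (of_real r)"
      by (rule holomorphic_power_series[OF F1]) (use l r in auto)
    then show "(\<lambda>n. A n * (l * of_real r) ^ n) sums f l (of_real r)"
      using cA[OF r] by (simp add: c_def[symmetric] power_mult_distrib mult_ac)
  qed
qed



lemma reflect:
  fixes a b :: "complex^'d"
  assumes "norm a = norm b" "cnj (cinner a b) = cinner a b" "a \<noteq> b"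
  shows "rmat (-1) (a - b) *v a = b"
proof -
  define X where "X = cinner a a - cinner a b"
  have N: "of_real (norm (a - b) ^ 2) = 2 * X"
  proof -
    have "of_real (norm (a - b) ^ 2) = cinner (a - b) (a - b)" by (simp add: cinner_self)
    also have "\<dots> = cinner a a - cinner a b - cinner b a + cinner b b"
      by (simp add: cinner_diff_left cinner_diff_right)
    also have "cinner b a = cinner a b" using assms(2) cinner_cnj[of a b] by simp
    also have "cinner b b = cinner a a" using assms(1) by (simp add: cinner_self)
    finally show ?thesis by (simp add: X_def)
  qed
  have X0: "X \<noteq> 0" using N assms(3) by auto
  have cX: "cinner a (a - b) = X" by (simp add: X_def cinner_diff_right)
  have "(-1 - 1) / of_real (norm (a - b) ^ 2) * cinner a (a - b) = -1"
    unfolding N cX using X0 by simp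
  then show ?thesis unfolding rmat_mult by simp
qed

lemma scalar_main:
  fixes k :: "complex^'d \<Rightarrow> complex^'d \<Rightarrow> complex"
  assumes H1: "\<And>w. w \<in> unit_ball \<Longrightarrow> holo_on unit_ball (\<lambda>z. k z w)"
    and H2: "\<And>z. z \<in> unit_ball \<Longrightarrow> holo_on unit_ball (\<lambda>w. cnj (k z w))"
    and H3: "\<And>u z w. unitary u \<Longrightarrow> z \<in> unit_ball \<Longrightarrow> w \<in> unit_ball \<Longrightarrow> k (u *v z) (u *v w) = k z w"
  shows "\<exists>a. \<forall>z\<in>unit_ball. \<forall>w\<in>unit_ball. (\<lambda>l. a l * cinner z w ^ l) sums k z w"
proof -
  define i0 :: 'd where "i0 = undefined"
  define e :: "complex^'d" where "e = axis i0 1"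
  have ne: "norm e = 1" by (simp add: e_def)
  have nse: "norm (l *s e) = cmod l" for l by (simp add: norm_smult_vec ne)
  have lb: "{l. norm (l *s e) < 1} = ball 0 1" by (auto simp: nse)
  define f where "f l m = k (l *s e) (m *s e)" for l m
  have F1: "(\<lambda>l. f l m) holomorphic_on ball 0 1" if "cmod m < 1" for m
  proof -
    have "holo_on unit_ball (\<lambda>z. k z (m *s e))" by (rule H1) (use that in \<open>simp add: nse\<close>)
    from line_holo[OF this, of 0 e] show ?thesis by (simp add: lb f_def)
  qed
  have F2: "(\<lambda>m. cnj (f l m)) holomorphic_on ball 0 1" if "cmod l < 1" for l
  proof -
    have "holo_on unit_ball (\<lambda>w. cnj (k (l *s e) w))" by (rule H2) (use that in \<open>simp add: nse\<close>)
    from line_holo[OF this, of 0 e] show ?thesis by (simp add: lb f_def)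
  qed
  have F3: "f (t * l) (t * m) = f l m" if "cmod t = 1" "cmod l < 1" "cmod m < 1" for t l m
  proof -
    have "k (mat t *v (l *s e)) (mat t *v (m *s e)) = k (l *s e) (m *s e)"
      by (rule H3[OF unitary_mat[OF that(1)]]) (use that in \<open>auto simp: nse\<close>)
    then show ?thesis by (simp add: f_def mat_mult_vec vector_smult_assoc)
  qed
  obtain A where A: "\<And>l r. cmod l < 1 \<Longrightarrow> 0 \<le> r \<Longrightarrow> r < 1 \<Longrightarrow>
      (\<lambda>n. A n * (l * of_real r) ^ n) sums f l (of_real r)"
    using core[of f, OF F1 F2 F3] by blast
  have slice: "k z (of_real r *s e) = f (z $ i0) (of_real r)" if z: "z \<in> unit_ball" and r: "0 \<le> r" "r < 1" for z r
  proof -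
    define a where "a = (z $ i0) *s e"
    define v where "v = z - a"
    have zav: "z = a + v" by (simp add: v_def)
    have v0: "v $ i0 = 0" by (simp add: v_def a_def e_def)
    have w: "of_real r *s e \<in> unit_ball" using r by (simp add: nse)
    have "k a (of_real r *s e) = k (a + v) (of_real r *s e)"
    proof (rule slice_const[where g="\<lambda>x. k x (of_real r *s e)"])
      show "holo_on unit_ball (\<lambda>x. k x (of_real r *s e))" by (rule H1[OF w])
      fix t :: complex assume t: "cmod t = 1"
      show "a + t *s v \<in> unit_ball \<and> k (a + t *s v) (of_real r *s e) = k (a + v) (of_real r *s e)"
      proof (cases "v = 0")
        case True then show ?thesis using z by (simp add: zav)
      next
        case False
        have cav: "cinner a v = 0" by (simp add: a_def e_def cinner_scale_left cinner_axis_left v0)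
        have cwv: "cinner (of_real r *s e) v = 0" by (simp add: e_def cinner_scale_left cinner_axis_left v0)
        have N0: "(of_real (norm v ^ 2) :: complex) \<noteq> 0" using False by simp
        have "rmat t v *v z = a + t *s v"
        proof -
          have "cinner z v = of_real (norm v ^ 2)"
            by (simp add: zav cinner_add_left cav cinner_self)
          then have C: "(t - 1) / of_real (norm v ^ 2) * cinner z v = t - 1" using N0 by simp
          show ?thesis unfolding rmat_mult C
            by (simp add: zav vec_eq_iff algebra_simps)
        qed
        moreover have "rmat t v *v (of_real r *s e) = of_real r *s e"
          unfolding rmat_mult cwv by simp
        moreover have "rmat t v *v z \<in> unit_ball" by (rule ball_unitary_rmat[OF t False z])
        ultimately show ?thesis
          using H3[OF unitary_rmat[OF t False] z w] zav by simp
      qed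
    qed
    then have "k a (of_real r *s e) = k z (of_real r *s e)" by (simp only: zav[symmetric])
    then show ?thesis by (simp add: f_def a_def)
  qed
  have rot: "\<exists>z''. z'' \<in> unit_ball \<and> k z w = k z'' (of_real (norm w) *s e) \<and>
      cinner z'' (of_real (norm w) *s e) = cinner z w" if z: "z \<in> unit_ball" and w: "w \<in> unit_ball" for z w
  proof (cases "w = 0")
    case True then show ?thesis using z by auto
  next
    case False
    define \<beta> where "\<beta> = w $ i0"
    define t0 where "t0 = (if \<beta> = 0 then 1 else cnj \<beta> / of_real (cmod \<beta>))"
    have t0: "cmod t0 = 1" by (simp add: t0_def norm_divide)
    have t0b: "t0 * \<beta> = of_real (cmod \<beta>)"
      by (simp add: t0_def complex_norm_square[symmetric] power2_eq_square mult.commute)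
    define z1 where "z1 = mat t0 *v z"
    define w1 where "w1 = mat t0 *v w"
    have z1: "z1 \<in> unit_ball" and w1: "w1 \<in> unit_ball"
      using ball_unitary_mat[OF t0] z w by (auto simp: z1_def w1_def)
    have kk1: "k z w = k z1 w1" using H3[OF unitary_mat[OF t0] z w] by (simp add: z1_def w1_def)
    have cc1: "cinner z1 w1 = cinner z w" by (simp add: z1_def w1_def cinner_mat[OF t0])
    have nw1: "norm w1 = norm w"
      using norm_from_cinner[OF cinner_mat[OF t0, of w w]] by (simp add: w1_def)
    define b where "b = of_real (norm w) *s e"
    have w1i: "w1 $ i0 = of_real (cmod \<beta>)" unfolding w1_def mat_mult_vec vector_smult_component \<beta>_def[symmetric] by (rule t0b)
    have real: "cnj (cinner w1 b) = cinner w1 b"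
      by (simp add: b_def e_def cinner_scale_right cinner_axis_right w1i)
    have nb: "norm w1 = norm b" by (simp add: b_def nw1 nse)
    show ?thesis
    proof (cases "w1 = b")
      case True then show ?thesis using z1 kk1 cc1 by (auto simp: b_def)
    next
      case wb: False
      have v0: "w1 - b \<noteq> 0" using wb by simp
      have m1: "cmod (-1) = 1" by simp
      define z2 where "z2 = rmat (-1) (w1 - b) *v z1"
      have "rmat (-1) (w1 - b) *v w1 = b" by (rule reflect[OF nb real wb])
      then have "k z1 w1 = k z2 b" using H3[OF unitary_rmat[OF m1 v0] z1 w1] by (simp add: z2_def)
      moreover have "cinner z2 b = cinner z1 w1"
        using cinner_rmat[OF m1 v0, of z1 w1] \<open>rmat (-1) (w1 - b) *v w1 = b\<close> by (simp add: z2_def)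
      moreover have "z2 \<in> unit_ball" unfolding z2_def by (rule ball_unitary_rmat[OF m1 v0 z1])
      ultimately show ?thesis using kk1 cc1 by (auto simp: b_def)
    qed
  qed
  show ?thesis
  proof (intro exI ballI)
    fix z w :: "complex^'d" assume z: "z \<in> unit_ball" and w: "w \<in> unit_ball"
    obtain z'' where z'': "z'' \<in> unit_ball" "k z w = k z'' (of_real (norm w) *s e)"
        "cinner z'' (of_real (norm w) *s e) = cinner z w"
      using rot[OF z w] by blast
    have r: "0 \<le> norm w" "norm w < 1" using w by auto
    have l: "cmod (z'' $ i0) < 1"
      using Finite_Cartesian_Product.norm_nth_le[of z'' i0] z'' by simp
    have "cinner z w = z'' $ i0 * of_real (norm w)"
      using z''(3) by (simp add: e_def cinner_scale_right cinner_axis_right mult.commute)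
    then show "(\<lambda>l. A l * cinner z w ^ l) sums k z w"
      using A[OF l r] slice[OF z''(1) r] z''(2) by simp
  qed
qed



definition omega :: "nat \<Rightarrow> complex" where
  "omega N = exp (2 * of_real pi * \<i> / of_nat N)"

lemma omega_pow: "omega N ^ m = exp (2 * of_real pi * \<i> * of_nat m / of_nat N)"
  unfolding omega_def exp_of_nat_mult[symmetric] by (simp add: mult_ac)

lemma omega_norm: "cmod (omega N ^ m) = 1"
  by (simp add: omega_def norm_power)

lemma omega_N: "N \<ge> 1 \<Longrightarrow> omega N ^ N = 1"
  unfolding omega_pow using complex_root_unity_eq_1[of N N] by simp

lemma omega_eq: "N \<ge> 1 \<Longrightarrow> omega N ^ m = omega N ^ l \<longleftrightarrow> m mod N = l mod N"
  unfolding omega_pow by (rule complex_root_unity_eq)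

lemma cnj_unit: "cmod x = 1 \<Longrightarrow> cnj x * x = 1"
  by (metis complex_norm_square mult.commute of_real_1 power_one)

lemma geo_G:
  assumes N: "N \<ge> 1" and lN: "l < N"
  shows "(\<Sum>p<N. (cnj (omega N ^ l) * omega N ^ m) ^ p) = (if m mod N = l then of_nat N else 0)"
proof -
  define x where "x = cnj (omega N ^ l) * omega N ^ m"
  have ul: "cnj (omega N ^ l) * omega N ^ l = 1" by (rule cnj_unit[OF omega_norm])
  show ?thesis
  proof (cases "m mod N = l")
    case True
    then have "omega N ^ m = omega N ^ l" using omega_eq[OF N, of m l] lN by simp
    then have "x = 1" using ul by (simp add: x_def)
    then show ?thesis using True by (simp add: x_def)
  next
    case False
    have x1: "x \<noteq> 1"
    proof
      assume "x = 1"
      have "omega N ^ m = (cnj (omega N ^ l) * omega N ^ l) * omega N ^ m"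
        by (simp only: ul mult_1_left)
      also have "\<dots> = omega N ^ l * x" by (simp only: x_def mult_ac)
      also have "\<dots> = omega N ^ l" using \<open>x = 1\<close> by simp
      finally have "omega N ^ m = omega N ^ l" .
      then show False using omega_eq[OF N, of m l] lN False by simp
    qed
    have "x ^ N = cnj ((omega N ^ N) ^ l) * (omega N ^ N) ^ m"
      by (simp add: x_def power_mult_distrib complex_cnj_power power_mult[symmetric] mult.commute)
    then have xN: "x ^ N = 1" using omega_N[OF N] by simp
    have "(\<Sum>p<N. x ^ p) = 0" using geometric_sum[OF x1, of N] xN by simp
    then show ?thesis using False by (simp add: x_def)
  qed
qed

lemma term_identity:
  assumes N: "N \<ge> 1" and lN: "l < N"
  shows "(\<Sum>p<N. \<Sum>q<N. omega N ^ (l * q) * cnj (omega N ^ (l * p)) *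
            (a * (of_real \<rho> * omega N ^ p * cnj (omega N ^ q)) ^ m))
       = of_nat N ^ 2 * (if m mod N = l then a * of_real \<rho> ^ m else 0)"
proof -
  define x where "x = cnj (omega N ^ l) * omega N ^ m"
  have "(\<Sum>p<N. \<Sum>q<N. omega N ^ (l * q) * cnj (omega N ^ (l * p)) *
            (a * (of_real \<rho> * omega N ^ p * cnj (omega N ^ q)) ^ m))
     = (\<Sum>p<N. \<Sum>q<N. (a * of_real \<rho> ^ m) * (x ^ p * cnj x ^ q))"
    by (intro sum.cong refl)
       (simp add: x_def power_mult_distrib complex_cnj_power power_mult mult_ac
          flip: power_mult)
  also have "\<dots> = (a * of_real \<rho> ^ m) * (\<Sum>p<N. \<Sum>q<N. x ^ p * cnj x ^ q)"
    by (simp add: sum_distrib_left)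
  also have "\<dots> = (a * of_real \<rho> ^ m) * ((\<Sum>p<N. x ^ p) * (\<Sum>q<N. cnj x ^ q))"
    by (simp only: sum_product)
  also have "(\<Sum>q<N. cnj x ^ q) = cnj (\<Sum>q<N. x ^ q)"
    by (simp add: cnj_sum complex_cnj_power)
  also have "(\<Sum>p<N. x ^ p) = (if m mod N = l then of_nat N else 0)"
    unfolding x_def by (rule geo_G[OF N lN])
  finally show ?thesis by (simp add: power2_eq_square)
qed



lemma nonneg_div_real: "0 \<le> (S::complex) \<Longrightarrow> 0 < r \<Longrightarrow> 0 \<le> S / of_real r"
  by (simp add: less_eq_complex_def Re_divide_of_real Im_divide_of_real)

lemma pos_coeff:
  fixes a :: "nat \<Rightarrow> complex" and \<Phi> :: "complex \<Rightarrow> complex" and \<rho> :: real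
  assumes ser: "\<And>u. cmod u < \<sigma> \<Longrightarrow> (\<lambda>m. a m * u ^ m) sums \<Phi> u"
    and nnd: "\<And>N c. 0 \<le> (\<Sum>p<N. \<Sum>q<N. c q * cnj (c p) * \<Phi> (of_real \<rho> * omega N ^ p * cnj (omega N ^ q)))"
    and \<rho>: "0 < \<rho>" "\<rho> < \<sigma>"
  shows "0 \<le> a l"
proof -
  define L where "L = a l * of_real \<rho> ^ l"
  define b where "b N m = (if m mod N = l then a m * of_real \<rho> ^ m else 0)" for N m
  define T where "T N = suminf (b N)" for N
  have Tsums: "b N sums T N \<and> 0 \<le> T N" if N: "N > l" for N
  proof -
    have N1: "N \<ge> 1" using N by simp
    define S where "S = (\<Sum>p<N. \<Sum>q<N. omega N ^ (l * q) * cnj (omega N ^ (l * p)) *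
        \<Phi> (of_real \<rho> * omega N ^ p * cnj (omega N ^ q)))"
    have S0: "0 \<le> S" unfolding S_def using nnd[where N=N and c="\<lambda>p. omega N ^ (l * p)"] .
    have u: "cmod (of_real \<rho> * omega N ^ p * cnj (omega N ^ q)) < \<sigma>" for p q
      using \<rho> by (simp only: norm_mult complex_mod_cnj omega_norm norm_of_real)
    have "(\<lambda>m. \<Sum>p<N. \<Sum>q<N. omega N ^ (l * q) * cnj (omega N ^ (l * p)) *
        (a m * (of_real \<rho> * omega N ^ p * cnj (omega N ^ q)) ^ m)) sums S"
      unfolding S_def by (intro sums_sum sums_mult ser u)
    then have "(\<lambda>m. of_nat N ^ 2 * b N m) sums S"
      using term_identity[OF N1 N] by (simp add: b_def)
    from sums_mult[OF this, of "1 / of_nat N ^ 2"]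
    have bs: "b N sums (S / of_real (real N ^ 2))" using N1 by simp
    moreover have "0 \<le> S / of_real (real N ^ 2)" by (rule nonneg_div_real[OF S0]) (use N1 in simp)
    ultimately show ?thesis by (simp add: T_def sums_unique[OF bs, symmetric])
  qed
  define s where "s m = norm (a m * of_real \<rho> ^ m)" for m
  have sum_s: "summable s"
  proof -
    have "summable (\<lambda>m. a m * of_real ((\<sigma> + \<rho>) / 2) ^ m)"
    proof -
      have "cmod (complex_of_real ((\<sigma> + \<rho>) / 2)) < \<sigma>" unfolding norm_of_real using \<rho> by simp
      from sums_summable[OF ser[OF this]] show ?thesis .
    qed
    moreover have "norm (complex_of_real \<rho>) < norm (complex_of_real ((\<sigma> + \<rho>) / 2))"
      unfolding norm_of_real using \<rho> by simp
    ultimately have "summable (\<lambda>n. norm (a n * complex_of_real \<rho> ^ n))" by (rule powser_insidea)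
    then show ?thesis unfolding s_def .
  qed
  define R where "R = (\<lambda>N. suminf s - (\<Sum>m<N. s m))"
  have Rs: "(\<lambda>m. if N \<le> m then s m else 0) sums R N" for N
  proof -
    have "(\<lambda>m. s m - (if m \<in> {..<N} then s m else 0)) sums (suminf s - (\<Sum>m\<in>{..<N}. s m))"
      by (intro sums_diff summable_sums sum_s sums_If_finite_set) simp
    moreover have "(\<lambda>m. s m - (if m \<in> {..<N} then s m else 0)) = (\<lambda>m. if N \<le> m then s m else 0)"
      by auto
    ultimately show ?thesis by (simp add: R_def)
  qed
  have bound: "norm (T N - L) \<le> R N" if N: "N > l" for N
  proof -
    define d where "d m = b N m - (if m = l then a m * of_real \<rho> ^ m else 0)" for m
    have ds: "d sums (T N - L)" unfolding d_def L_def
      by (intro sums_diff Tsums[OF N, THEN conjunct1] sums_single)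
    have dn: "norm (d m) \<le> (if N \<le> m then s m else 0)" for m
    proof (cases "m = l")
      case True then show ?thesis using N by (simp add: d_def b_def)
    next
      case False
      show ?thesis
      proof (cases "m mod N = l")
        case True
        then have "N \<le> m" using False by (metis mod_less not_le)
        then show ?thesis using True False by (simp add: d_def b_def s_def)
      next
        case F2: False
        then show ?thesis using False by (simp add: d_def b_def s_def)
      qed
    qed
    have sR: "summable (\<lambda>m. if N \<le> m then s m else 0)" using Rs by (rule sums_summable)
    have snd: "summable (\<lambda>m. norm (d m))"
      by (rule summable_comparison_test[OF _ sR]) (use dn in auto)
    have "norm (T N - L) = norm (suminf d)" using sums_unique[OF ds] by simp
    also have "\<dots> \<le> (\<Sum>m. norm (d m))" by (rule summable_norm[OF snd])
    also have "\<dots> \<le> (\<Sum>m. if N \<le> m then s m else 0)"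
      by (rule suminf_le[OF dn snd sR])
    also have "\<dots> = R N" using sums_unique[OF Rs] by simp
    finally show ?thesis .
  qed
  have R0: "R \<longlonglongrightarrow> 0"
  proof -
    have "(\<lambda>N. suminf s - (\<Sum>m<N. s m)) \<longlonglongrightarrow> suminf s - suminf s"
      by (intro tendsto_diff tendsto_const summable_LIMSEQ sum_s)
    then show ?thesis by (simp add: R_def)
  qed
  have "(\<lambda>N. T N - L) \<longlonglongrightarrow> 0"
  proof (rule Lim_null_comparison[OF _ R0])
    show "\<forall>\<^sub>F N in sequentially. norm (T N - L) \<le> R N"
      using eventually_ge_at_top[of "Suc l"] by eventually_elim (auto intro: bound)
  qed
  then have TL: "T \<longlonglongrightarrow> L" by (rule LIM_zero_cancel)
  have ReL: "0 \<le> Re L"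
  proof (rule LIMSEQ_le_const[OF tendsto_Re[OF TL]])
    show "\<exists>N. \<forall>n\<ge>N. 0 \<le> Re (T n)"
      using Tsums by (intro exI[of _ "Suc l"]) (auto simp: less_eq_complex_def)
  qed
  have Im1: "0 \<le> Im L"
  proof (rule LIMSEQ_le_const[OF tendsto_Im[OF TL]])
    show "\<exists>N. \<forall>n\<ge>N. 0 \<le> Im (T n)"
      using Tsums by (intro exI[of _ "Suc l"]) (auto simp: less_eq_complex_def)
  qed
  have Im2: "Im L \<le> 0"
  proof (rule LIMSEQ_le_const2[OF tendsto_Im[OF TL]])
    show "\<exists>N. \<forall>n\<ge>N. Im (T n) \<le> 0"
      using Tsums by (intro exI[of _ "Suc l"]) (auto simp: less_eq_complex_def)
  qed
  have Lr: "L = a l * of_real (\<rho> ^ l)" by (simp add: L_def)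
  have p: "0 < \<rho> ^ l" using \<rho> by simp
  have "0 \<le> Re (a l) * \<rho> ^ l" using ReL by (simp add: Lr)
  then have "0 \<le> Re (a l)" using p by (simp add: zero_le_mult_iff)
  moreover have "Im (a l) * \<rho> ^ l = 0" using Im1 Im2 by (simp add: Lr)
  then have "Im (a l) = 0" using p \<rho> by simp
  ultimately show ?thesis by (simp add: less_eq_complex_def)
qed



lemma sums_mat:
  fixes X :: "nat \<Rightarrow> complex^'n^'m"
  assumes "\<And>i j. (\<lambda>l. X l $ i $ j) sums (Y $ i $ j)"
  shows "X sums Y"
  unfolding sums_def
proof (rule vec_tendstoI)
  fix i
  show "((\<lambda>n. (\<Sum>l<n. X l) $ i) \<longlongrightarrow> Y $ i) sequentially"
    unfolding sum_component
  proof (rule vec_tendstoI)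
    fix j
    show "((\<lambda>n. (\<Sum>l<n. X l $ i) $ j) \<longlongrightarrow> Y $ i $ j) sequentially"
      unfolding sum_component using assms[of i j] by (simp add: sums_def)
  qed
qed

lemma cinner_mv: "cinner (M *v x) x = (\<Sum>i\<in>UNIV. (\<Sum>j\<in>UNIV. M $ i $ j * x $ j) * cnj (x $ i))"
  by (simp add: cinner_def matrix_vector_mult_def)

lemma mv_scale: "(M::complex^'n^'m) *v (c *s x) = c *s (M *v x)"
  by (simp add: vec_eq_iff matrix_vector_mult_def sum_distrib_left mult_ac)

theorem proposition4p7:
  fixes K :: "complex ^ 'd \<Rightarrow> complex ^ 'd \<Rightarrow> complex ^ 'n ^ 'n"
  assumes "sesqui_analytic K"
    and "nnd_kernel K"
    and "\<And>u z w. unitary u \<Longrightarrow> z \<in> unit_ball \<Longrightarrow> w \<in> unit_ball \<Longrightarrow>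
           K (u *v z) (u *v w) = K z w"
  shows "\<exists>A :: nat \<Rightarrow> complex ^ 'n ^ 'n. (\<forall>l. pos_def_mat (A l)) \<and>
           (\<forall>z\<in>unit_ball. \<forall>w\<in>unit_ball.
              (\<lambda>l. \<chi> i j. A l $ i $ j * cinner z w ^ l) sums K z w)"
proof -
  have scal: "\<exists>a. \<forall>z\<in>unit_ball. \<forall>w\<in>unit_ball. (\<lambda>l. a l * cinner z w ^ l) sums K z w $ i $ j" for i j
  proof (rule scalar_main)
    show "holo_on unit_ball (\<lambda>z. K z w $ i $ j)" if "w \<in> unit_ball" for w
      using assms(1) that unfolding sesqui_analytic_def by blast
    show "holo_on unit_ball (\<lambda>w. cnj (K z w $ i $ j))" if "z \<in> unit_ball" for z
      using assms(1) that unfolding sesqui_analytic_def by blast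
    show "K (u *v z) (u *v w) $ i $ j = K z w $ i $ j"
      if "unitary u" "z \<in> unit_ball" "w \<in> unit_ball" for u z w
      using assms(3)[OF that] by simp
  qed
  obtain a where a: "\<And>i j z w. z \<in> unit_ball \<Longrightarrow> w \<in> unit_ball \<Longrightarrow>
      (\<lambda>l. a i j l * cinner z w ^ l) sums K z w $ i $ j"
  proof -
    have s2: "\<forall>i. \<exists>f. \<forall>j. \<forall>z\<in>unit_ball. \<forall>w\<in>unit_ball. (\<lambda>l. f j l * cinner z w ^ l) sums K z w $ i $ j"
    proof
      fix i
      have "\<forall>j. \<exists>b. \<forall>z\<in>unit_ball. \<forall>w\<in>unit_ball. (\<lambda>l. b l * cinner z w ^ l) sums K z w $ i $ j"
        using scal by blast
      then show "\<exists>f. \<forall>j. \<forall>z\<in>unit_ball. \<forall>w\<in>unit_ball. (\<lambda>l. f j l * cinner z w ^ l) sums K z w $ i $ j"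
        by (rule choice)
    qed
    from choice[OF s2] obtain a where
      "\<forall>i j. \<forall>z\<in>unit_ball. \<forall>w\<in>unit_ball. (\<lambda>l. a i j l * cinner z w ^ l) sums K z w $ i $ j"
      by blast
    then show ?thesis using that by blast
  qed
  define A where "A l = (\<chi> i j. a i j l)" for l
  have ser: "(\<lambda>l. \<chi> i j. A l $ i $ j * cinner z w ^ l) sums K z w"
    if "z \<in> unit_ball" "w \<in> unit_ball" for z w
    by (rule sums_mat) (simp add: A_def a[OF that])
  have qser: "(\<lambda>m. cinner (A m *v x) x * cinner z w ^ m) sums cinner (K z w *v x) x"
    if "z \<in> unit_ball" "w \<in> unit_ball" for z w x
  proof -
    have "(\<lambda>m. \<Sum>i\<in>UNIV. (\<Sum>j\<in>UNIV. (a i j m * cinner z w ^ m) * x $ j) * cnj (x $ i))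
        sums (\<Sum>i\<in>UNIV. (\<Sum>j\<in>UNIV. K z w $ i $ j * x $ j) * cnj (x $ i))"
      by (intro sums_sum sums_mult2 a that)
    moreover have "(\<lambda>m. \<Sum>i\<in>UNIV. (\<Sum>j\<in>UNIV. (a i j m * cinner z w ^ m) * x $ j) * cnj (x $ i))
        = (\<lambda>m. cinner (A m *v x) x * cinner z w ^ m)"
    proof
      fix m
      have "(\<Sum>i\<in>UNIV. (\<Sum>j\<in>UNIV. (a i j m * cinner z w ^ m) * x $ j) * cnj (x $ i))
          = (\<Sum>i\<in>UNIV. ((\<Sum>j\<in>UNIV. a i j m * x $ j) * cnj (x $ i)) * cinner z w ^ m)"
      proof (intro sum.cong refl)
        fix i
        have "(\<Sum>j\<in>UNIV. (a i j m * cinner z w ^ m) * x $ j) = (\<Sum>j\<in>UNIV. a i j m * x $ j) * cinner z w ^ m"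
          unfolding sum_distrib_right by (intro sum.cong refl) (simp add: mult_ac)
        then show "(\<Sum>j\<in>UNIV. (a i j m * cinner z w ^ m) * x $ j) * cnj (x $ i)
            = ((\<Sum>j\<in>UNIV. a i j m * x $ j) * cnj (x $ i)) * cinner z w ^ m"
          by (simp add: mult_ac)
      qed
      also have "\<dots> = cinner (A m *v x) x * cinner z w ^ m"
        by (simp add: cinner_mv A_def sum_distrib_right)
      finally show "(\<Sum>i\<in>UNIV. (\<Sum>j\<in>UNIV. (a i j m * cinner z w ^ m) * x $ j) * cnj (x $ i))
          = cinner (A m *v x) x * cinner z w ^ m" .
    qed
    ultimately show ?thesis by (simp add: cinner_mv)
  qed
  define i0 :: 'd where "i0 = undefined"
  define e :: "complex^'d" where "e = axis i0 1"
  have ne: "norm e = 1" by (simp add: e_def)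
  have nse: "norm (l *s e) = cmod l" for l by (simp add: norm_smult_vec ne)
  have cee: "cinner (l *s e) (m *s e) = l * cnj m" for l m
    by (simp add: e_def cinner_scale_left cinner_scale_right cinner_axis_left)
  have pos: "pos_def_mat (A l)" for l
    unfolding pos_def_mat_def
  proof
    fix x :: "complex^'n"
    define \<Phi> where "\<Phi> u = cinner (K ((2 * u) *s e) ((1/2) *s e) *v x) x" for u
    have P1: "(\<lambda>m. cinner (A m *v x) x * u ^ m) sums \<Phi> u" if u: "cmod u < 1/2" for u
    proof -
      have "(2 * u) *s e \<in> unit_ball" "(1/2) *s e \<in> unit_ball" using u by (auto simp: nse norm_mult)
      from qser[OF this, of x] show ?thesis by (simp add: \<Phi>_def cee)
    qed
    show "0 \<le> cinner (A l *v x) x"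
    proof (rule pos_coeff[where \<Phi>=\<Phi> and \<rho>="1/4" and \<sigma>="1/2"])
      show "(\<lambda>m. cinner (A m *v x) x * u ^ m) sums \<Phi> u" if "cmod u < 1/2" for u
        by (rule P1[OF that])
      show "(0::real) < 1/4" "(1/4::real) < 1/2" by simp_all
      fix N :: nat and c :: "nat \<Rightarrow> complex"
      define z where "z p = (of_real (1/2) * omega N ^ p) *s e" for p
      have zb: "z p \<in> unit_ball" for p by (simp add: z_def nse norm_mult omega_norm)
      have czz: "cinner (z p) (z q) = of_real (1/4) * omega N ^ p * cnj (omega N ^ q)" for p q
        by (simp add: z_def cee)
      have "0 \<le> (\<Sum>p<N. \<Sum>q<N. cinner (K (z p) (z q) *v (c q *s x)) (c p *s x))"
        using assms(2)[unfolded nnd_kernel_def, rule_format, of N z "\<lambda>q. c q *s x"] zb by simp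
      also have "(\<Sum>p<N. \<Sum>q<N. cinner (K (z p) (z q) *v (c q *s x)) (c p *s x))
          = (\<Sum>p<N. \<Sum>q<N. c q * cnj (c p) * \<Phi> (of_real (1/4) * omega N ^ p * cnj (omega N ^ q)))"
      proof (intro sum.cong refl)
        fix p q
        have "cmod (of_real (1/4) * omega N ^ p * cnj (omega N ^ q)) < 1/2"
          by (simp only: norm_mult complex_mod_cnj omega_norm norm_of_real)
        from sums_unique2[OF qser[OF zb[of p] zb[of q], of x, unfolded czz] P1[OF this]]
        have "cinner (K (z p) (z q) *v x) x = \<Phi> (of_real (1/4) * omega N ^ p * cnj (omega N ^ q))"
          by (simp add: czz)
        then show "cinner (K (z p) (z q) *v (c q *s x)) (c p *s x)
            = c q * cnj (c p) * \<Phi> (of_real (1/4) * omega N ^ p * cnj (omega N ^ q))"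
          unfolding mv_scale cinner_scale_left cinner_scale_right by (simp add: mult.assoc)
      qed
      finally show "0 \<le> (\<Sum>p<N. \<Sum>q<N. c q * cnj (c p) * \<Phi> (of_real (1/4) * omega N ^ p * cnj (omega N ^ q)))" .
    qed
  qed
  show ?thesis using pos ser by blast
qed

end
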